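(* Let $\lambda\in(0,1)$ and $s=(s_1,s_2)\in\mathbb{R}^2$ with $|s|=1$, $s\neq e_1$, and either $s=e_2$ or $s_1s_2\neq0$. (i) For every $\gamma\in K_{s,\lambda}$ and $R\in SO(2)$ there exists $N\in\mathcal{M}_{e_1}\cap\mathcal{N}_s$ such that $Ne_1=Re_1$ and $\lambda N+(1-\lambda)R=R(\mathbb{I}+\gamma e_1\otimes e_2)$. (ii) Let $N\in\mathcal{N}_s$ and $R\in SO(2)$ with $Re_1=Ne_1$. Then there exists $\gamma\in K_{s,\lambda}$ such that $\lambda N+(1-\lambda)R=R(\mathbb{I}+\gamma e_1\otimes e_2)$.
   Context: $\mathcal{M}_{e_1}=\{F\in\mathbb{R}^{2\times2}:\det F=1,|Fe_1|=1\}$; $\mathcal{N}_s=\{F\in\mathbb{R}^{2\times2}:\det F=1,|Fs|\le1\}$. $K_{s,\lambda}=\{0\}$ if $s=e_2$; $K_{s,\lambda}=[-2\frac{s_1}{s_2}\lambda,0]$ if $s_1s_2>0$; $K_{s,\lambda}=[0,-2\frac{s_1}{s_2}\lambda]$ if $s_1s_2<0$. *)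

theory Defs
  imports "HOL-Analysis.Analysis"
begin

definition e1 :: "real^2" where "e1 = axis 1 1"
definition e2 :: "real^2" where "e2 = axis 2 1"

definition outer :: "real^2 \<Rightarrow> real^2 \<Rightarrow> real^2^2" where
  "outer u v = (\<chi> i j. u $ i * v $ j)"

definition SO2 :: "(real^2^2) set" where
  "SO2 = {R. orthogonal_matrix R \<and> det R = 1}"

definition M_e1 :: "(real^2^2) set" where
  "M_e1 = {F. det F = 1 \<and> norm (F *v e1) = 1}"

definition N_s :: "real^2 \<Rightarrow> (real^2^2) set" where
  "N_s s = {F. det F = 1 \<and> norm (F *v s) \<le> 1}"

text \<open>K_{s,lambda}; the last branch never occurs under the standing hypotheses.\<close>
definition K :: "real^2 \<Rightarrow> real \<Rightarrow> real set" where
  "K s lam =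
    (if s = e2 then {0}
     else if s $ 1 * s $ 2 > 0 then {-2 * (s $ 1 / s $ 2) * lam .. 0}
     else if s $ 1 * s $ 2 < 0 then {0 .. -2 * (s $ 1 / s $ 2) * lam}
     else {})"

end

theory Submission
  imports Defs
begin

lemma orth_norm:
  fixes R :: "real^'n^'n"
  assumes "orthogonal_matrix R"
  shows "norm (R *v x) = norm x"
proof -
  have "orthogonal_transformation ((*v) R)"
    using assms orthogonal_transformation_matrix[of "(*v) R"] by simp
  then show ?thesis by (simp add: orthogonal_transformation_norm)
qed

lemma mat2_eq: "(A::real^2^2) = B \<longleftrightarrow>
   A$1$1 = B$1$1 \<and> A$1$2 = B$1$2 \<and> A$2$1 = B$2$1 \<and> A$2$2 = B$2$2"
  by (auto simp: vec_eq_iff forall_2)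

lemma E_comp: "(mat 1 + c *\<^sub>R outer e1 e2 :: real^2^2)$1$1 = 1"
  "(mat 1 + c *\<^sub>R outer e1 e2 :: real^2^2)$1$2 = c"
  "(mat 1 + c *\<^sub>R outer e1 e2 :: real^2^2)$2$1 = 0"
  "(mat 1 + c *\<^sub>R outer e1 e2 :: real^2^2)$2$2 = 1"
  by (simp_all add: mat_def outer_def e1_def e2_def axis_def)

lemma mv2: "((A::real^2^2) *v x)$1 = A$1$1 * x$1 + A$1$2 * x$2"
   "((A::real^2^2) *v x)$2 = A$2$1 * x$1 + A$2$2 * x$2"
  by (simp_all add: matrix_vector_mult_def sum_2)

lemma e_comp: "e1$1 = 1" "e1$2 = 0" "e2$1 = 0" "e2$2 = 1"
  by (simp_all add: e1_def e2_def axis_def)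

lemma norm_sq2: "norm (x::real^2) = sqrt ((x$1)^2 + (x$2)^2)"
  unfolding norm_eq_sqrt_inner by (simp add: inner_vec_def sum_2 power2_eq_square)

lemma norm_le1: "norm (x::real^2) \<le> 1 \<longleftrightarrow> (x$1)^2 + (x$2)^2 \<le> 1"
  unfolding norm_sq2 by simp

lemma norm_eq1: "norm (x::real^2) = 1 \<longleftrightarrow> (x$1)^2 + (x$2)^2 = 1"
  unfolding norm_sq2 by simp

lemma keyval:
  fixes s :: "real^2" and a :: real
  assumes "norm s = 1"
  shows "norm ((mat 1 + a *\<^sub>R outer e1 e2) *v s) \<le> 1 \<longleftrightarrow> a * s$2 * (2 * s$1 + a * s$2) \<le> 0"
proof -
  have s: "(s$1)^2 + (s$2)^2 = 1" using assms norm_eq1 by blast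
  have "(1 * s$1 + a * s$2)^2 + (0 * s$1 + 1 * s$2)^2 = 1 + a * s$2 * (2 * s$1 + a * s$2)"
    using s by (simp add: power2_eq_square algebra_simps)
  then show ?thesis unfolding norm_le1 mv2 E_comp by linarith
qed

lemma mat1c: "(mat 1::real^2^2)$1$1 = 1" "(mat 1::real^2^2)$1$2 = 0"
  "(mat 1::real^2^2)$2$1 = 0" "(mat 1::real^2^2)$2$2 = 1"
  by (simp_all add: mat_def)

lemma comb:
  fixes R :: "real^2^2"
  shows "lam *\<^sub>R (R ** (mat 1 + a *\<^sub>R outer e1 e2)) + (1 - lam) *\<^sub>R R
       = R ** (mat 1 + (lam * a) *\<^sub>R outer e1 e2)"
  unfolding mat2_eq
  by (simp add: matrix_matrix_mult_def sum_2 E_comp mat1c algebra_simps)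

lemma quad_pos: "(t::real) > 0 \<Longrightarrow> a * (a + 2*t) \<le> 0 \<longleftrightarrow> -2*t \<le> a \<and> a \<le> 0"
  unfolding mult_le_0_iff by auto

lemma quad_neg: "(t::real) < 0 \<Longrightarrow> a * (a + 2*t) \<le> 0 \<longleftrightarrow> 0 \<le> a \<and> a \<le> -2*t"
  unfolding mult_le_0_iff by auto

lemma Kchar:
  fixes s :: "real^2"
  assumes lam: "0 < lam" and h: "s = e2 \<or> s $ 1 * s $ 2 \<noteq> 0"
  shows "lam * a \<in> K s lam \<longleftrightarrow> a * s$2 * (2 * s$1 + a * s$2) \<le> 0"
proof (cases "s = e2")
  case True
  then show ?thesis using lam by (auto simp add: K_def e_comp mult_le_0_iff)
next
  case False
  then have ne: "s$1 * s$2 \<noteq> 0" using h by blast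
  then have s2: "s$2 \<noteq> 0" by auto
  define t where "t = s$1 / s$2"
  have s1: "s$1 = t * s$2" using s2 by (simp add: t_def)
  have sq: "(s$2)^2 > 0" using s2 by simp
  have eq: "a * s$2 * (2 * s$1 + a * s$2) = (s$2)^2 * (a * (a + 2*t))"
    by (simp add: s1 power2_eq_square algebra_simps)
  have iff: "a * s$2 * (2 * s$1 + a * s$2) \<le> 0 \<longleftrightarrow> a * (a + 2*t) \<le> 0"
    unfolding eq using sq by (simp add: mult_le_0_iff)
  show ?thesis
  proof (cases "s$1 * s$2 > 0")
    case True
    have "s$1 * s$2 = t * (s$2)^2" by (simp add: s1 power2_eq_square)
    then have tp: "t > 0" using True sq by (metis zero_less_mult_pos2)
    have "lam * a \<in> K s lam \<longleftrightarrow> -2 * t * lam \<le> lam * a \<and> lam * a \<le> 0"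
      using False True by (simp add: K_def t_def)
    also have "\<dots> \<longleftrightarrow> lam * (-2*t) \<le> lam * a \<and> lam * a \<le> lam * 0"
      by (simp add: algebra_simps)
    also have "\<dots> \<longleftrightarrow> -2*t \<le> a \<and> a \<le> 0" using lam
      by (simp only: mult_le_cancel_left_pos)
    finally show ?thesis using iff quad_pos[OF tp] by simp
  next
    case False2: False
    then have lt: "s$1 * s$2 < 0" using ne by linarith
    have "s$1 * s$2 = t * (s$2)^2" by (simp add: s1 power2_eq_square)
    then have tn: "t < 0" using lt sq by (auto simp: mult_less_0_iff)
    have "lam * a \<in> K s lam \<longleftrightarrow> 0 \<le> lam * a \<and> lam * a \<le> -2 * t * lam"
      using False False2 lt by (simp add: K_def t_def)
    also have "\<dots> \<longleftrightarrow> lam * 0 \<le> lam * a \<and> lam * a \<le> lam * (-2*t)"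
      by (simp add: algebra_simps)
    also have "\<dots> \<longleftrightarrow> 0 \<le> a \<and> a \<le> -2*t" using lam
      by (simp only: mult_le_cancel_left_pos)
    finally show ?thesis using iff quad_neg[OF tn] by simp
  qed
qed

lemma Ee1: "(mat 1 + a *\<^sub>R outer e1 e2 :: real^2^2) *v e1 = e1"
  unfolding vec_eq_iff forall_2 mv2 E_comp e_comp by simp

lemma detE: "det (mat 1 + a *\<^sub>R outer e1 e2 :: real^2^2) = 1"
  unfolding det_2 E_comp by simp

theorem lemma3p4:
  fixes lam :: real and s :: "real^2"
  assumes "0 < lam" and "lam < 1"
    and "norm s = 1" and "s \<noteq> e1"
    and "s = e2 \<or> s $ 1 * s $ 2 \<noteq> 0"
  shows "(\<forall>\<gamma>\<in>K s lam. \<forall>R\<in>SO2. \<exists>N\<in>M_e1 \<inter> N_s s.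
            N *v e1 = R *v e1 \<and>
            lam *\<^sub>R N + (1 - lam) *\<^sub>R R = R ** (mat 1 + \<gamma> *\<^sub>R outer e1 e2))
       \<and> (\<forall>N\<in>N_s s. \<forall>R\<in>SO2. R *v e1 = N *v e1 \<longrightarrow>
            (\<exists>\<gamma>\<in>K s lam. lam *\<^sub>R N + (1 - lam) *\<^sub>R R = R ** (mat 1 + \<gamma> *\<^sub>R outer e1 e2)))"
proof (intro conjI ballI impI)
  fix \<gamma> R assume g: "\<gamma> \<in> K s lam" and R: "R \<in> SO2"
  define a where "a = \<gamma> / lam"
  have ga: "\<gamma> = lam * a" using assms(1) by (simp add: a_def)
  have oR: "orthogonal_matrix R" and dR: "det R = 1" using R by (auto simp: SO2_def)
  define N where "N = R ** (mat 1 + a *\<^sub>R outer e1 e2)"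
  have Ne1: "N *v e1 = R *v e1" by (simp add: N_def matrix_vector_mul_assoc[symmetric] Ee1)
  have ne1: "norm e1 = 1" by (simp add: e1_def)
  have "det N = 1" by (simp add: N_def det_mul dR detE)
  moreover have "norm (N *v e1) = 1" using Ne1 orth_norm[OF oR] ne1 by simp
  moreover have "norm (N *v s) \<le> 1"
  proof -
    have "norm (N *v s) = norm ((mat 1 + a *\<^sub>R outer e1 e2) *v s)"
      by (simp add: N_def matrix_vector_mul_assoc[symmetric] orth_norm[OF oR])
    also have "\<dots> \<le> 1" using keyval[OF assms(3)] Kchar[OF assms(1) assms(5)] g ga by simp
    finally show ?thesis .
  qed
  ultimately have "N \<in> M_e1 \<inter> N_s s" by (simp add: M_e1_def N_s_def)
  moreover have "lam *\<^sub>R N + (1 - lam) *\<^sub>R R = R ** (mat 1 + \<gamma> *\<^sub>R outer e1 e2)"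
    unfolding N_def comb ga ..
  ultimately show "\<exists>N\<in>M_e1 \<inter> N_s s. N *v e1 = R *v e1 \<and>
            lam *\<^sub>R N + (1 - lam) *\<^sub>R R = R ** (mat 1 + \<gamma> *\<^sub>R outer e1 e2)"
    using Ne1 by blast
next
  fix N R assume N: "N \<in> N_s s" and R: "R \<in> SO2" and e: "R *v e1 = N *v e1"
  have oR: "orthogonal_matrix R" and dR: "det R = 1" using R by (auto simp: SO2_def)
  have dN: "det N = 1" and nN: "norm (N *v s) \<le> 1" using N by (auto simp: N_s_def)
  define M where "M = transpose R ** N"
  have RM: "R ** M = N" using oR unfolding M_def orthogonal_matrix_def
    by (simp add: matrix_mul_assoc)
  have dM: "det M = 1" by (simp add: M_def det_mul det_transpose dR dN)
  have Me1: "M *v e1 = e1"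
  proof -
    have "M *v e1 = transpose R *v (R *v e1)" by (simp add: M_def e matrix_vector_mul_assoc[symmetric])
    also have "\<dots> = e1" using oR unfolding orthogonal_matrix_def
      by (simp add: matrix_vector_mul_assoc)
    finally show ?thesis .
  qed
  have m11: "M$1$1 = 1" and m21: "M$2$1 = 0"
    using arg_cong[OF Me1, of "\<lambda>v. v$1"] arg_cong[OF Me1, of "\<lambda>v. v$2"]
    by (simp_all add: mv2 e_comp)
  have m22: "M$2$2 = 1" using dM by (simp add: det_2 m11 m21)
  define a where "a = M$1$2"
  have Meq: "M = mat 1 + a *\<^sub>R outer e1 e2"
    unfolding mat2_eq E_comp by (simp add: m11 m21 m22 a_def)
  have "norm ((mat 1 + a *\<^sub>R outer e1 e2) *v s) \<le> 1"
    using nN orth_norm[OF oR, of "M *v s"] unfolding Meq[symmetric]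
    by (simp add: matrix_vector_mul_assoc RM)
  then have "lam * a \<in> K s lam"
    using keyval[OF assms(3)] Kchar[OF assms(1) assms(5)] by simp
  moreover have "lam *\<^sub>R N + (1 - lam) *\<^sub>R R = R ** (mat 1 + (lam * a) *\<^sub>R outer e1 e2)"
    unfolding comb[symmetric] Meq[symmetric] RM ..
  ultimately show "\<exists>\<gamma>\<in>K s lam. lam *\<^sub>R N + (1 - lam) *\<^sub>R R = R ** (mat 1 + \<gamma> *\<^sub>R outer e1 e2)"
    by blast
qed

end
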